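(* Let $\Omega_n=\dfrac{\pi^{n/2}}{\Gamma\left(\frac n2+1\right)}$ for $n\in\mathbb{N}$. Define, for $n\in\mathbb{N}$, \[ \mu(n)=\frac{1}{6n^{2}}-\frac{1}{45n^{4}}+\frac{8}{315n^{6}}-\frac{8}{105n^{8}},\qquad \lambda(n)=\mu(n)+\frac{1}{128n^{10}}, \] \[ \alpha(n)=-\frac{n+1}{2n}\ln\frac{n}{2}+\frac12\ln(\pi e)-\frac{\ln 2\pi}{2n}-\lambda(n),\qquad \beta(n)=-\frac{n+1}{2n}\ln\frac{n}{2}+\frac12\ln(\pi e)-\frac{\ln 2\pi}{2n}-\mu(n). \] Then $\alpha(n)-\beta(n+1)>0$ for every $n\in\mathbb{N}$. In consequence, the sequence $\left\{\Omega_n^{1/n}\right\}_{n\ge1}$ decreases monotonically (to $0$).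
   Context: $\Omega_n$ is the volume of the unit ball in $\mathbb{R}^n$; $\Gamma$ is Euler's gamma function. The functions $\alpha,\beta$ satisfy $\alpha(n)<\frac1n\ln\Omega_n<\beta(n)$ for all $n\in\mathbb{N}$ (a previously known result). *)

theory Defs
  imports "HOL-Analysis.Analysis"
begin

definition Omega :: "nat \<Rightarrow> real" where
  "Omega n = pi powr (real n / 2) / Gamma (real n / 2 + 1)"

definition mu :: "nat \<Rightarrow> real" where
  "mu n = 1 / (6 * real n ^ 2) - 1 / (45 * real n ^ 4) + 8 / (315 * real n ^ 6)
          - 8 / (105 * real n ^ 8)"

definition lam :: "nat \<Rightarrow> real" where
  "lam n = mu n + 1 / (128 * real n ^ 10)"

definition alpha :: "nat \<Rightarrow> real" where
  "alpha n = - ((real n + 1) / (2 * real n)) * ln (real n / 2) + ln (pi * exp 1) / 2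
             - ln (2 * pi) / (2 * real n) - lam n"

definition beta :: "nat \<Rightarrow> real" where
  "beta n = - ((real n + 1) / (2 * real n)) * ln (real n / 2) + ln (pi * exp 1) / 2
             - ln (2 * pi) / (2 * real n) - mu n"

end

theory Submission
  imports Defs "HOL-Real_Asymp.Real_Asymp"
begin

lemma ln1p_lower:
  fixes t :: real assumes "0 \<le> t" shows "t - t^2/2 \<le> ln (1 + t)"
proof -
  let ?f = "\<lambda>s::real. ln (1 + s) - s + s^2/2"
  have "?f 0 \<le> ?f t"
  proof (rule DERIV_nonneg_imp_nondecreasing[OF assms])
    fix x :: real assume x: "0 \<le> x" "x \<le> t"
    show "\<exists>y. (?f has_real_derivative y) (at x) \<and> 0 \<le> y"
    proof (intro exI conjI)
      show "(?f has_real_derivative (1/(1+x) - 1 + x)) (at x)"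
        using x by (auto intro!: derivative_eq_intros)
      have "1/(1+x) - 1 + x = x^2/(1+x)" using x by (simp add: field_simps power2_eq_square)
      thus "0 \<le> 1/(1+x) - 1 + x" using x by simp
    qed
  qed
  thus ?thesis by simp
qed
lemma D_alg: "(x::real) > 0 \<Longrightarrow> - ((x + 1) / (2 * x)) * (lx - l2) + (lp + 1) / 2
             - (l2 + lp) / (2 * x) - A
      - (- ((x + 1 + 1) / (2 * (x+1))) * (l1 - l2) + (lp + 1) / 2
             - (l2 + lp) / (2 * (x+1)) - B) = (x+2)/(2*(x+1)) * (l1 - lx) - (lx + lp)/(2*x*(x+1)) - A + B"
proof -
  assume x: "x > 0"
  define a where "a = 1/(2*x)"
  define b where "b = 1/(2*(x+1))"
  have r1: "(x + 1) / (2 * x) = 1/2 + a" using x by (simp add: field_simps a_def)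
  have r2: "(x + 1 + 1) / (2 * (x+1)) = 1/2 + b" using x by (simp add: field_simps b_def)
  have r3: "(x + 2) / (2 * (x+1)) = 1/2 + b" using x by (simp add: field_simps b_def)
  have q: "1/(2*x) - 1/(2*(x+1)) = 1/(2*x*(x+1))" using x by (simp add: divide_simps)
  have r4: "(lx + lp)/(2*x*(x+1)) = (lx+lp) * (a - b)"
    unfolding a_def b_def by (simp only: q) simp
  have r5: "(l2 + lp) / (2 * x) = (l2+lp) * a" "(l2 + lp) / (2 * (x+1)) = (l2+lp) * b" 
    by (simp_all add: a_def b_def)
  show ?thesis unfolding r1 r2 r3 r4 r5
    by (simp add: algebra_simps) (simp add: field_simps)
qed
lemma P_pos: fixes x :: real assumes x: "x \<ge> 2"
  shows "(x+2)/(2*(x+1)) * (1/x - 1/(2*x^2)) - (x - 1 + 25/18)/(2*x*(x+1)) - (1/(6*x^2) + 1/(30*x^6)) > 0"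
proof -
  have x0: "x > 0" "x + 1 > 0" using x by auto
  have t1: "2*x*(x+1) * ((x+2)/(2*(x+1)) * (1/x - 1/(2*x^2))) = x + 3/2 - 1/x"
  proof -
    have "2*x*(x+1) * ((x+2)/(2*(x+1))) = x*(x+2)" using x0 by (simp add: field_simps)
    moreover have "x*(x+2) * (1/x - 1/(2*x^2)) = x + 3/2 - 1/x" using x0 by (simp add: field_simps power2_eq_square)
    ultimately show ?thesis by (metis mult.assoc)
  qed
  have t2: "2*x*(x+1) * ((x - 1 + 25/18)/(2*x*(x+1))) = x - 1 + 25/18" using x0 by simp
  have t3: "2*x*(x+1) * (1/(6*x^2) + 1/(30*x^6)) = 1/3 + 1/(3*x) + 1/(15*x^4) + 1/(15*x^5)"
    using x0 by (simp add: field_simps power_def)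
  have key: "2*x*(x+1) * ((x+2)/(2*(x+1)) * (1/x - 1/(2*x^2)) - (x - 1 + 25/18)/(2*x*(x+1)) - (1/(6*x^2) + 1/(30*x^6)))
     = (x + 3/2 - 1/x) - (x - 1 + 25/18) - (1/3 + 1/(3*x) + 1/(15*x^4) + 1/(15*x^5))"
  proof -
    have gen: "\<And>a p q r::real. a*(p-q-r) = a*p - a*q - a*r" by (simp add: algebra_simps)
    show ?thesis by (subst gen) (simp only: t1 t2 t3)
  qed
  have b1: "1/x \<le> 1/2" "1/(3*x) \<le> 1/6" using x by (simp_all add: field_simps)
  have "x^4 \<ge> 2^4" using x by (intro power_mono) auto
  hence b2: "1/(15*x^4) \<le> 1/240" using x0 by (intro divide_left_mono) auto
  have "x^5 \<ge> 2^5" using x by (intro power_mono) auto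
  hence b3: "1/(15*x^5) \<le> 1/480" using x0 by (intro divide_left_mono) auto
  have "2*x*(x+1) * ((x+2)/(2*(x+1)) * (1/x - 1/(2*x^2)) - (x - 1 + 25/18)/(2*x*(x+1)) - (1/(6*x^2) + 1/(30*x^6))) > 0"
    unfolding key using b1 b2 b3 by linarith
  moreover have "2*x*(x+1) > 0" using x0 by simp
  ultimately show ?thesis by (simp add: zero_less_mult_iff)
qed
lemma lnpi_le: "ln pi \<le> 25/18"
proof -
  have "ln pi \<le> ln (2*2::real)" using pi_less_4 pi_gt_zero by (subst ln_le_cancel_iff) auto
  also have "\<dots> = 2 * ln 2" using ln_mult[of "2::real" 2] by simp
  also have "\<dots> \<le> 25/18" using ln2_le_25_over_36 by simp
  finally show ?thesis .
qed

lemma mu_nonneg: assumes "m \<ge> 2" shows "mu m \<ge> 0"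
proof -
  define y where "y = real m"
  have y: "y \<ge> 2" using assms by (simp add: y_def)
  have "y^2 \<ge> 2^2" using y by (intro power_mono) auto
  hence y2: "y^2 \<ge> 4" by simp
  have e: "y^4 = y^2 * y^2" by (simp add: power_def)
  have "4 * y^2 \<le> y^2 * y^2" using y2 by (intro mult_right_mono) auto
  hence a1: "6*y^2 \<le> 45*y^4" using e y2 by linarith
  have "1/(45*y^4) \<le> 1/(6*y^2)" using y2 a1 by (intro divide_left_mono) auto
  moreover have a2: "315*y^6 \<le> 105*y^8"
  proof -
    have "105*y^8 = (105*y^2)*y^6" by (simp add: power_def)
    moreover have "315 \<le> 105*y^2" using y2 by simp
    moreover have "y^6 \<ge> 0" using y by simp
    ultimately show ?thesis by (metis mult_right_mono)
  qed
  have "8/(105*y^8) \<le> 8/(315*y^6)" using y a2 by (intro divide_left_mono) auto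
  ultimately show ?thesis unfolding mu_def y_def[symmetric] by linarith
qed

lemma lam_le: assumes "n \<ge> 2" shows "lam n \<le> 1/(6*real n^2) + 1/(30*real n^6)"
proof -
  define x where "x = real n"
  have x: "x \<ge> 2" using assms by (simp add: x_def)
  have "x^4 \<ge> 2^4" using x by (intro power_mono) auto
  hence x4: "x^4 \<ge> 16" by simp
  have x6: "x^6 > 0" using x by simp
  have "128*x^10 = (128*x^4)*x^6" by (simp add: power_def)
  moreover have "16*x^6 \<le> x^4*x^6" using x4 x6 by (intro mult_right_mono) auto
  ultimately have "2048*x^6 \<le> 128*x^10" by simp
  hence "1/(128*x^10) \<le> 1/(2048*x^6)" using x6 by (intro divide_left_mono) auto
  moreover have "8/(315*x^6) + 1/(2048*x^6) \<le> 1/(30*x^6)" using x6 by (simp add: field_simps)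
  moreover have "1/(45*x^4) \<ge> 0" "8/(105*x^8) \<ge> 0" using x by auto
  ultimately show ?thesis unfolding lam_def mu_def x_def[symmetric] by linarith
qed


lemma D_identity:
  fixes n :: nat assumes "n \<ge> 1"
  shows "alpha n - beta (n + 1) =
     (real n+2)/(2*(real n+1)) * ln ((real n+1)/real n) - (ln (real n) + ln pi)/(2*real n*(real n+1)) - lam n + mu (n+1)"
proof -
  define x where "x = real n"
  have x: "x > 0" using assms by (simp add: x_def)
  have e1: "ln (x/2) = ln x - ln 2" using x by (simp add: ln_div)
  have e2: "ln ((x+1)/2) = ln (x+1) - ln 2" using x by (simp add: ln_div)
  have e3: "ln ((x+1)/x) = ln (x+1) - ln x" using x by (simp add: ln_div)
  have e4: "ln (2*pi) = ln 2 + ln pi" by (simp add: ln_mult)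
  have e5: "ln (pi * exp 1) = ln pi + 1" by (simp add: ln_mult)
  have "alpha n - beta (n + 1) = - ((x + 1) / (2 * x)) * (ln x - ln 2) + (ln pi + 1) / 2
             - (ln 2 + ln pi) / (2 * x) - lam n
      - (- ((x + 1 + 1) / (2 * (x+1))) * (ln (x+1) - ln 2) + (ln pi + 1) / 2
             - (ln 2 + ln pi) / (2 * (x+1)) - mu (n+1))"
    unfolding alpha_def beta_def x_def[symmetric] using e1 e2 e4 e5
    by (simp add: x_def add.commute)
  also have "\<dots> = (x+2)/(2*(x+1)) * (ln (x+1) - ln x) - (ln x + ln pi)/(2*x*(x+1)) - lam n + mu (n+1)"
    by (rule D_alg[OF x])
  finally show ?thesis using e3 by (simp add: x_def)
qed

lemma part1: assumes "n \<ge> 1" shows "alpha n - beta (n + 1) > 0"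
proof (cases "n = 1")
  case True
  have "alpha n - beta (n + 1) = 3/4 * ln 2 - ln pi / 4 - lam 1 + mu 2"
    using D_identity[OF assms] True by (simp add: numeral_eq_Suc)
  moreover have "lam 1 = 1/6 - 1/45 + 8/315 - 8/105 + 1/128" by (simp add: lam_def mu_def)
  moreover have "mu 2 = 1/24 - 1/720 + 8/(315*64) - 8/(105*256)" by (simp add: mu_def)
  ultimately show ?thesis using ln2_ge_two_thirds lnpi_le by simp
next
  case False
  hence n2: "n \<ge> 2" using assms by simp
  define x where "x = real n"
  have x: "x \<ge> 2" using n2 by (simp add: x_def)
  have L: "ln ((x+1)/x) \<ge> 1/x - 1/(2*x^2)"
  proof -
    have "(x+1)/x = 1 + 1/x" using x by (simp add: field_simps)
    moreover have "1/x - (1/x)^2/2 = 1/x - 1/(2*x^2)" by (simp add: power2_eq_square)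
    ultimately show ?thesis using ln1p_lower[of "1/x"] x by simp
  qed
  have c: "(x+2)/(2*(x+1)) \<ge> 0" using x by simp
  have T1: "(x+2)/(2*(x+1)) * ln ((x+1)/x) \<ge> (x+2)/(2*(x+1)) * (1/x - 1/(2*x^2))"
    using mult_left_mono[OF L c] .
  have "ln x \<le> x - 1" using x by (intro ln_le_minus_one) auto
  hence "ln x + ln pi \<le> x - 1 + 25/18" using lnpi_le by linarith
  hence T2: "(ln x + ln pi)/(2*x*(x+1)) \<le> (x - 1 + 25/18)/(2*x*(x+1))"
    using x by (intro divide_right_mono) auto
  have T3: "lam n \<le> 1/(6*x^2) + 1/(30*x^6)" using lam_le[OF n2] by (simp add: x_def)
  have T4: "mu (n+1) \<ge> 0" using n2 by (intro mu_nonneg) simp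
  have "alpha n - beta (n + 1) = (x+2)/(2*(x+1)) * ln ((x+1)/x) - (ln x + ln pi)/(2*x*(x+1)) - lam n + mu (n+1)"
    using D_identity[OF assms] by (simp add: x_def)
  thus ?thesis using T1 T2 T3 T4 P_pos[OF x] by linarith
qed

lemma G_strict:
  fixes a b :: real assumes ab: "0 < a" "a < b"
  shows "ln_Gamma (a+1) / a < ln_Gamma (b+1) / b"
proof -
  have lg1: "ln_Gamma (1::real) = 0" by (simp add: ln_Gamma_real_pos)
  have "\<exists>z. 1 < z \<and> z < a+1 \<and> ln_Gamma (a+1) - ln_Gamma 1 = (a+1-1) * Digamma z"
    using ab by (intro MVT2) (auto intro!: derivative_intros)
  then obtain z1 where z1: "1 < z1" "z1 < a+1" "ln_Gamma (a+1) - ln_Gamma 1 = (a+1-1) * Digamma z1"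
    by blast
  have "\<exists>z. a+1 < z \<and> z < b+1 \<and> ln_Gamma (b+1) - ln_Gamma (a+1) = (b+1-(a+1)) * Digamma z"
    using ab by (intro MVT2) (auto intro!: derivative_intros)
  then obtain z2 where z2: "a+1 < z2" "z2 < b+1" "ln_Gamma (b+1) - ln_Gamma (a+1) = (b+1-(a+1)) * Digamma z2"
    by blast
  have d: "Digamma z1 < Digamma z2" using z1 z2 by (intro Digamma_real_strict_mono) auto
  have A: "ln_Gamma (a+1) = a * Digamma z1" using z1 lg1 by simp
  have B: "ln_Gamma (b+1) = a * Digamma z1 + (b - a) * Digamma z2" using z2 A by simp
  have "ln_Gamma (a+1) / a = Digamma z1" using A ab by simp
  also have "Digamma z1 = (a * Digamma z1 + (b-a) * Digamma z1) / b" using ab by (simp add: field_simps)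
  also have "\<dots> < (a * Digamma z1 + (b-a) * Digamma z2) / b"
    using ab d by (intro divide_strict_right_mono) auto
  finally show ?thesis using B by simp
qed

lemma Omega_root:
  assumes "n \<ge> 1"
  shows "Omega n powr (1 / real n) = exp (ln pi / 2 - ln_Gamma (real n / 2 + 1) / real n)"
proof -
  have g: "Gamma (real n / 2 + 1) > 0" by (intro Gamma_real_pos) simp
  have p: "Omega n > 0" unfolding Omega_def using g by (intro divide_pos_pos) simp_all
  have "ln (Omega n) = ln (pi powr (real n / 2)) - ln (Gamma (real n / 2 + 1))"
    unfolding Omega_def using g by (intro ln_divide_pos) auto
  also have "\<dots> = real n / 2 * ln pi - ln_Gamma (real n / 2 + 1)"
    by (simp add: ln_powr ln_Gamma_real_pos)
  finally have "ln (Omega n) = real n / 2 * ln pi - ln_Gamma (real n / 2 + 1)" .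
  hence "1 / real n * ln (Omega n) = ln pi / 2 - ln_Gamma (real n / 2 + 1) / real n"
    using assms by (simp add: field_simps)
  thus ?thesis using p by (simp add: powr_def)
qed

lemma part2: assumes "n \<ge> 1"
  shows "Omega (n + 1) powr (1 / real (n + 1)) < Omega n powr (1 / real n)"
proof -
  have "ln_Gamma (real n/2+1) / (real n/2) < ln_Gamma ((real n+1)/2+1) / ((real n+1)/2)"
    using assms by (intro G_strict) auto
  moreover have "ln_Gamma (real n/2+1) / (real n/2) = 2 * (ln_Gamma (real n/2+1) / real n)" by simp
  moreover have "ln_Gamma ((real n+1)/2+1) / ((real n+1)/2) = 2 * (ln_Gamma ((real n+1)/2+1) / (real n+1))" by simp
  ultimately have "ln_Gamma (real n/2+1) / real n < ln_Gamma ((real n+1)/2+1) / (real n+1)"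
    by (metis mult_less_cancel_left_pos zero_less_numeral)
  thus ?thesis using Omega_root[OF assms] Omega_root[of "n+1"] by (simp add: add.commute)
qed

lemma fact_lower: "real m ^ m / fact m \<le> exp (real m)"
proof -
  have s: "(\<lambda>k. real m ^ k / fact k) sums exp (real m)"
    using exp_converges[of "real m"] by (simp add: divide_inverse mult.commute)
  have "sum (\<lambda>k. real m ^ k / fact k) {m} \<le> suminf (\<lambda>k. real m ^ k / fact k)"
    using s by (intro sum_le_suminf) (auto simp: sums_iff)
  thus ?thesis using s by (simp add: sums_iff)
qed

lemma ln_fact_lower: assumes "m \<ge> 1" shows "real m * ln (real m) - real m \<le> ln (fact m)"
proof -
  have fp: "(fact m :: real) > 0" by simp
  have "real m ^ m \<le> exp (real m) * fact m" using fact_lower[of m] fp by (simp add: field_simps)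
  hence "ln (real m ^ m) \<le> ln (exp (real m) * fact m)" using assms by (subst ln_le_cancel_iff) auto
  thus ?thesis using assms fp by (simp add: ln_realpow ln_mult)
qed

lemma root_bound: assumes "n \<ge> 6"
  shows "Omega n powr (1 / real n) \<le> exp (ln pi / 2 - (ln ((real n - 1)/2) - 1)/3)"
proof -
  define m where "m = n div 2"
  have nm: "n \<le> 2*m + 1" "2*m \<le> n" unfolding m_def by auto
  have m3: "m \<ge> 3" using assms nm by linarith
  have "real n \<le> real (2*m+1)" "real (2*m) \<le> real n" using nm by (simp_all only: of_nat_le_iff)
  hence rm: "real m \<ge> (real n - 1)/2" "real m \<le> real n / 2" by simp_all
  have rm3: "real m \<ge> 3" using m3 by simp
  have g1: "ln_Gamma (real m + 1) \<le> ln_Gamma (real n / 2 + 1)"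
  proof (cases "real m = real n / 2")
    case True thus ?thesis by (simp only: True)
  next
    case False
    hence "real m + 1 < real n / 2 + 1" using rm by linarith
    thus ?thesis using rm3 by (intro less_imp_le ln_Gamma_real_strict_mono) auto
  qed
  have g2: "ln_Gamma (real m + 1) = ln (fact m)"
    using Gamma_fact[of m, where 'a = real] by (simp add: ln_Gamma_real_pos add.commute)
  have lm: "ln (real m) \<ge> 1"
  proof -
    have "exp 1 \<le> real m" using exp_le rm3 by linarith
    hence "ln (exp 1) \<le> ln (real m)" using m3 by (subst ln_le_cancel_iff) auto
    thus ?thesis by simp
  qed
  have lm2: "ln (real m) \<ge> ln ((real n - 1)/2)" using rm assms by (subst ln_le_cancel_iff) auto
  have h: "real m * (ln (real m) - 1) \<le> ln_Gamma (real n / 2 + 1)"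
    using ln_fact_lower[of m] m3 g1 g2 by (simp add: algebra_simps)
  have npos: "real n > 0" using assms by simp
  have "(ln (real m) - 1) / 3 \<le> real m * (ln (real m) - 1) / real n"
  proof -
    have "real n \<ge> 6" using assms by simp
    moreover have "real n - 1 \<le> 2 * real m" using rm(1) by simp
    ultimately have "real n \<le> 3 * real m" by linarith
    hence "real n * (ln (real m) - 1) \<le> 3 * real m * (ln (real m) - 1)"
      using lm by (intro mult_right_mono) auto
    thus ?thesis using npos by (simp add: field_simps)
  qed
  also have "\<dots> \<le> ln_Gamma (real n / 2 + 1) / real n" using h npos by (intro divide_right_mono) auto
  finally have f1: "(ln (real m) - 1) / 3 \<le> ln_Gamma (real n / 2 + 1) / real n" .
  have "(ln ((real n - 1)/2) - 1)/3 \<le> (ln (real m) - 1) / 3" using lm2 by (intro divide_right_mono) auto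
  hence "(ln ((real n - 1)/2) - 1)/3 \<le> ln_Gamma (real n / 2 + 1) / real n" using f1 by (rule order.trans)
  thus ?thesis using Omega_root[of n] assms by simp
qed

lemma part3: "(\<lambda>n. Omega n powr (1 / real n)) \<longlonglongrightarrow> 0"
proof (rule tendsto_sandwich[of "\<lambda>_. 0" _ _ "\<lambda>n::nat. exp (ln pi / 2 - (ln ((real n - 1)/2) - 1)/3)"])
  show "\<forall>\<^sub>F n in sequentially. 0 \<le> Omega n powr (1 / real n)" by simp
  show "\<forall>\<^sub>F n in sequentially. Omega n powr (1 / real n) \<le> exp (ln pi / 2 - (ln ((real n - 1)/2) - 1)/3)"
    using eventually_ge_at_top[of "6::nat"] by eventually_elim (rule root_bound)
  show "(\<lambda>n. 0::real) \<longlonglongrightarrow> 0" by simp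
  show "(\<lambda>n::nat. exp (ln pi / 2 - (ln ((real n - 1)/2) - 1)/3)) \<longlonglongrightarrow> 0" by real_asymp
qed


theorem theorem2:
  shows "(\<forall>n::nat. n \<ge> 1 \<longrightarrow> alpha n - beta (n + 1) > 0)
       \<and> (\<forall>n::nat. n \<ge> 1 \<longrightarrow>
            Omega (n + 1) powr (1 / real (n + 1)) < Omega n powr (1 / real n))
       \<and> ((\<lambda>n. Omega n powr (1 / real n)) \<longlonglongrightarrow> 0)"
  using part1 part2 part3 by blast

end
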